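(* Fix $-1<\alpha<0$ and a continuously differentiable $f:(0,\infty)\times\mathbb T\to\mathbb R$. Assume there is $T_1<\infty$ with $f(t,x)=0$ for $t\ge T_1$ and that $\|f\|_{C^1(\Omega_{0\bullet})}<\infty$. Let $f_n(t,x)=f(t,x)\varphi_n(t)$, $n\in\mathbb N_0$ (extended by $0$ for $t\le0$). Then there exists a finite constant $C_0$, independent of $\alpha$ and $f$, such that $$|X(f_n)|\le C_0\,2^{-n(1+\alpha)}\,\|f\|_{C^1(\Omega_{0\bullet})}\,\|X\|_{C^\alpha([-1,2]\times\mathbb T)}$$ for all $X\in C^\alpha$ and $n\in\mathbb N_0$.
   Context: $\mathbb T=[-1/2,1/2)$; on $\mathbb R\times\mathbb T$, $d((t,x),(t',x'))=|t-t'|+d_{\mathbb T}(x,x')$, $\mathbb B(z,a)$ the open ball. $\Omega_{0\bullet}=(0,\infty)\times\mathbb T$ and $\|f\|_{C^1(\Omega_{0\bullet})}=\|f\|_{L^\infty(\Omega_{0\bullet})}+\|\partial_tf\|_{L^\infty(\Omega_{0\bullet})}+\|\partial_xf\|_{L^\infty(\Omega_{0\bullet})}$. $\varphi:\mathbb R_+\to[0,1]$ is a smooth function with $\varphi(r)=0$ for $r\notin(1/16,1/4)$ and $\sum_{n\in\mathbb Z}\varphi(2^nr)=1$ for $r>0$; $\varphi_n(r)=\varphi(2^nr)$. For $-1<\alpha<0$: $B_1$ is the set of $g\in C^1_c(\mathbb R\times\mathbb T)$ supported in $\mathbb B(0,1/4)$ with $\|g\|_\infty+\|\partial_tg\|_\infty+\|\partial_xg\|_\infty\le1$;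 $(S^\delta_zg)(w)=\delta^{-2}g((w-z)/\delta)$ on $\mathbb B(z,\delta)$, $0$ otherwise; for a linear functional $X$ on $C^1_c(\mathbb R\times\mathbb T)$, $\|X\|_{C^\alpha([S,T]\times\mathbb T)}=\sup_{\delta\in(0,1]}\sup_{z\in[S,T]\times\mathbb T}\sup_{g\in B_1}\delta^{-\alpha}|X(S^\delta_zg)|$; $C^\alpha$ is the set of $X$ with this finite for all $S<T$. *)

theory Defs
  imports "HOL-Analysis.Analysis"
begin

(* Points of R x T are pairs (t,x) :: real * real; functions on R x T are
   functions real * real => real that are 1-periodic in x.  T = [-1/2,1/2). *)

definition trep :: "real \<Rightarrow> real" where
  "trep u = u - of_int \<lfloor>u + 1/2\<rfloor>"

definition dT :: "real \<Rightarrow> real \<Rightarrow> real" where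
  "dT x y = \<bar>trep (x - y)\<bar>"

definition dRT :: "real \<times> real \<Rightarrow> real \<times> real \<Rightarrow> real" where
  "dRT z w = \<bar>fst z - fst w\<bar> + dT (snd z) (snd w)"

definition ballRT :: "real \<times> real \<Rightarrow> real \<Rightarrow> (real \<times> real) set" where
  "ballRT z a = {w. dRT z w < a}"

definition periodic_x :: "(real \<times> real \<Rightarrow> real) \<Rightarrow> bool" where
  "periodic_x f \<longleftrightarrow> (\<forall>t x. f (t, x + 1) = f (t, x))"

definition pdt :: "(real \<times> real \<Rightarrow> real) \<Rightarrow> real \<times> real \<Rightarrow> real" where
  "pdt f z = frechet_derivative f (at z) (1, 0)"

definition pdx :: "(real \<times> real \<Rightarrow> real) \<Rightarrow> real \<times> real \<Rightarrow> real" where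
  "pdx f z = frechet_derivative f (at z) (0, 1)"

definition C1_on :: "(real \<times> real) set \<Rightarrow> (real \<times> real \<Rightarrow> real) \<Rightarrow> bool" where
  "C1_on S f \<longleftrightarrow> (\<forall>z\<in>S. f differentiable (at z)) \<and>
      continuous_on S (pdt f) \<and> continuous_on S (pdx f)"

definition C1c :: "(real \<times> real \<Rightarrow> real) \<Rightarrow> bool" where
  "C1c g \<longleftrightarrow> periodic_x g \<and> C1_on UNIV g \<and> (\<exists>K. \<forall>t x. \<bar>t\<bar> > K \<longrightarrow> g (t, x) = 0)"

definition supnorm :: "(real \<times> real) set \<Rightarrow> (real \<times> real \<Rightarrow> real) \<Rightarrow> real" where
  "supnorm S f = (SUP z\<in>S. \<bar>f z\<bar>)"

definition Omega0 :: "(real \<times> real) set" where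
  "Omega0 = {0<..} \<times> {-1/2..<1/2}"

definition C1norm_Omega0 :: "(real \<times> real \<Rightarrow> real) \<Rightarrow> real" where
  "C1norm_Omega0 f = supnorm Omega0 f + supnorm Omega0 (pdt f) + supnorm Omega0 (pdx f)"

definition B1 :: "(real \<times> real \<Rightarrow> real) set" where
  "B1 = {g. C1c g \<and> (\<forall>w. g w \<noteq> 0 \<longrightarrow> w \<in> ballRT (0, 0) (1/4)) \<and>
            supnorm UNIV g + supnorm UNIV (pdt g) + supnorm UNIV (pdx g) \<le> 1}"

definition chart :: "(real \<times> real \<Rightarrow> real) \<Rightarrow> real \<times> real \<Rightarrow> real" where
  "chart g w = (if -1/2 \<le> snd w \<and> snd w < 1/2 then g w else 0)"

definition scaleS :: "real \<Rightarrow> real \<times> real \<Rightarrow> (real \<times> real \<Rightarrow> real) \<Rightarrow> real \<times> real \<Rightarrow> real" where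
  "scaleS \<delta> z g w = (if w \<in> ballRT z \<delta>
      then \<delta> powr (-2) * chart g ((fst w - fst z) / \<delta>, trep (snd w - snd z) / \<delta>)
      else 0)"

definition linear_C1c :: "((real \<times> real \<Rightarrow> real) \<Rightarrow> real) \<Rightarrow> bool" where
  "linear_C1c X \<longleftrightarrow> (\<forall>f g a b. C1c f \<longrightarrow> C1c g \<longrightarrow>
      X (\<lambda>w. a * f w + b * g w) = a * X f + b * X g)"

definition holder_vals :: "real \<Rightarrow> ((real \<times> real \<Rightarrow> real) \<Rightarrow> real) \<Rightarrow> real \<Rightarrow> real \<Rightarrow> real set" where
  "holder_vals \<alpha> X S T = {\<delta> powr (-\<alpha>) * \<bar>X (scaleS \<delta> z g)\<bar> | \<delta> z g.
      \<delta> \<in> {0<..1} \<and> z \<in> {S..T} \<times> {-1/2..<1/2} \<and> g \<in> B1}"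

definition holder_norm :: "real \<Rightarrow> ((real \<times> real \<Rightarrow> real) \<Rightarrow> real) \<Rightarrow> real \<Rightarrow> real \<Rightarrow> real" where
  "holder_norm \<alpha> X S T = Sup (holder_vals \<alpha> X S T)"

definition Calpha :: "real \<Rightarrow> ((real \<times> real \<Rightarrow> real) \<Rightarrow> real) set" where
  "Calpha \<alpha> = {X. linear_C1c X \<and> (\<forall>S T. S < T \<longrightarrow> bdd_above (holder_vals \<alpha> X S T))}"

definition smooth_on :: "real set \<Rightarrow> (real \<Rightarrow> real) \<Rightarrow> bool" where
  "smooth_on S h \<longleftrightarrow> (\<forall>k. \<forall>r\<in>S. ((deriv ^^ k) h) differentiable (at r))"

end

theory Submission
  imports Defs
begin

lemma trep_range: "-1/2 \<le> trep u \<and> trep u < 1/2"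
  unfolding trep_def by linarith

lemma trep_unique:
  assumes "-1/2 \<le> v" "v < 1/2" "u = v + of_int k"
  shows "trep u = v"
proof -
  have "\<lfloor>u + 1/2\<rfloor> = k" using assms by (simp add: floor_eq_iff)
  then show ?thesis using assms unfolding trep_def by simp
qed

lemma trep_period: "trep (u + of_int k) = trep u"
  by (rule trep_unique[of _ _ "k + \<lfloor>u + 1/2\<rfloor>"]) (use trep_range[of u] in \<open>auto simp: trep_def\<close>)

lemma trep_period1: "trep (u + 1) = trep u"
  using trep_period[of u 1] by simp

lemma trep_id: "-1/2 \<le> v \<Longrightarrow> v < 1/2 \<Longrightarrow> trep v = v"
  by (rule trep_unique[of _ _ 0]) auto

lemma abs_trep_neg: "\<bar>trep (- u)\<bar> = \<bar>trep u\<bar>"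
proof (cases "trep u = -1/2")
  case True
  have "trep (-u) = -1/2"
    by (rule trep_unique[of _ _ "1 - \<lfloor>u + 1/2\<rfloor>"]) (use True in \<open>auto simp: trep_def\<close>)
  then show ?thesis using True by simp
next
  case False
  have "trep (-u) = - trep u"
  proof (rule trep_unique[of _ _ "- \<lfloor>u + 1/2\<rfloor>"])
    show "-1/2 \<le> - trep u" "- trep u < 1/2" using False trep_range[of u] by auto
  qed (simp add: trep_def)
  then show ?thesis by simp
qed

lemma trep_local:
  assumes "\<bar>u - u0\<bar> < 1/4"
  shows "trep u = u - of_int \<lfloor>u0 + 1/2\<rfloor> \<or>
    (1/4 \<le> \<bar>trep u\<bar> \<and> 1/4 \<le> \<bar>u - of_int \<lfloor>u0 + 1/2\<rfloor>\<bar> \<and> \<bar>u - of_int \<lfloor>u0 + 1/2\<rfloor>\<bar> \<le> 3/4)"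
proof -
  define k where "k = \<lfloor>u0 + 1/2\<rfloor>"
  define k' where "k' = \<lfloor>u + 1/2\<rfloor>"
  have h1: "of_int k \<le> u0 + 1/2" "u0 + 1/2 < of_int k + 1" unfolding k_def by linarith+
  have h2: "of_int k' \<le> u + 1/2" "u + 1/2 < of_int k' + 1" unfolding k'_def by linarith+
  have "trep u = u - of_int k'" unfolding trep_def k'_def by simp
  moreover have "k' = k \<or> k' = k + 1 \<or> k' = k - 1"
  proof -
    have "(of_int k' :: real) < of_int (k + 2)" "(of_int (k - 2) :: real) < of_int k'" using h1 h2 assms[unfolded abs_less_iff] by simp_all
    then have "k' < k + 2" "k - 2 < k'" by (simp_all only: of_int_less_iff)
    then show ?thesis by linarith
  qed
  ultimately show ?thesis unfolding k_def[symmetric] using h1 h2 assms by auto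
qed

definition D2 :: "(real \<times> real \<Rightarrow> real) \<Rightarrow> real \<Rightarrow> real \<Rightarrow> real \<times> real \<Rightarrow> bool" where
  "D2 B b1 b2 z \<longleftrightarrow> (B has_derivative (\<lambda>d. fst d * b1 + snd d * b2)) (at z)"

lemma D2_pd: assumes "D2 B b1 b2 z" shows "pdt B z = b1" "pdx B z = b2"
proof -
  have "frechet_derivative B (at z) = (\<lambda>d. fst d * b1 + snd d * b2)"
    using assms unfolding D2_def by (metis frechet_derivative_at)
  then show "pdt B z = b1" "pdx B z = b2" unfolding pdt_def pdx_def by simp_all
qed

lemma D2_diff: "D2 B b1 b2 z \<Longrightarrow> B differentiable (at z)"
  unfolding D2_def by (rule differentiableI)

lemma D2_of_diff: assumes "B differentiable (at z)" shows "D2 B (pdt B z) (pdx B z) z"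
proof -
  let ?L = "frechet_derivative B (at z)"
  have d: "(B has_derivative ?L) (at z)" using assms frechet_derivative_works by blast
  then have lin: "linear ?L" using has_derivative_linear by blast
  have eq: "?L d = fst d * ?L (1,0) + snd d * ?L (0,1)" for d
  proof -
    obtain a b where d: "d = (a,b)" by (cases d)
    have l1: "?L ((a, 0) + (0, b)) = ?L (a, 0) + ?L (0, b)" using lin[unfolded linear_iff] by blast
    have l2: "?L (a *\<^sub>R (1, 0)) = a *\<^sub>R ?L (1, 0)" using lin[unfolded linear_iff] by blast
    have l3: "?L (b *\<^sub>R (0, 1)) = b *\<^sub>R ?L (0, 1)" using lin[unfolded linear_iff] by blast
    show ?thesis using l1 l2 l3 d by simp
  qed
  have Leq: "?L = (\<lambda>d. fst d * pdt B z + snd d * pdx B z)"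
    unfolding pdt_def pdx_def by (rule ext) (rule eq)
  from d show ?thesis unfolding D2_def by (simp only: Leq)
qed

lemma D2_add: "D2 A a1 a2 z \<Longrightarrow> D2 B b1 b2 z \<Longrightarrow> D2 (\<lambda>w. A w + B w) (a1 + b1) (a2 + b2) z"
  unfolding D2_def by (drule (1) has_derivative_add) (simp add: algebra_simps)

lemma D2_mult: "D2 A a1 a2 z \<Longrightarrow> D2 B b1 b2 z \<Longrightarrow>
   D2 (\<lambda>w. A w * B w) (A z * b1 + a1 * B z) (A z * b2 + a2 * B z) z"
  unfolding D2_def by (drule (1) has_derivative_mult) (simp add: algebra_simps)

lemma D2_const: "D2 (\<lambda>w. c) 0 0 z"
  unfolding D2_def by simp

lemma D2_cmult: "D2 B b1 b2 z \<Longrightarrow> D2 (\<lambda>w. c * B w) (c * b1) (c * b2) z"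
  using D2_mult[OF D2_const, of B b1 b2 z c] by simp

lemma D2_fst_fun: assumes "(g has_real_derivative g') (at (fst z))"
  shows "D2 (\<lambda>w. g (fst w)) g' 0 z"
proof -
  have "((\<lambda>w. g (fst w)) has_derivative (\<lambda>d. g' * fst d)) (at z)"
    using has_derivative_compose[OF has_derivative_fst[OF has_derivative_ident]
        has_field_derivative_imp_has_derivative[OF assms]] by simp
  then show ?thesis unfolding D2_def by (simp add: mult.commute)
qed

lemma D2_snd_fun: assumes "(g has_real_derivative g') (at (snd z))"
  shows "D2 (\<lambda>w. g (snd w)) 0 g' z"
proof -
  have "((\<lambda>w. g (snd w)) has_derivative (\<lambda>d. g' * snd d)) (at z)"
    using has_derivative_compose[OF has_derivative_snd[OF has_derivative_ident]
        has_field_derivative_imp_has_derivative[OF assms]] by simp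
  then show ?thesis unfolding D2_def by (simp add: mult.commute)
qed

lemma D2_affine: assumes "D2 B b1 b2 (p + q * a, r + s * v)"
  shows "D2 (\<lambda>w. B (p + q * fst w, r + s * snd w)) (q * b1) (s * b2) (a, v)"
proof -
  have inner: "((\<lambda>w. (p + q * fst w, r + s * snd w)) has_derivative (\<lambda>d. (q * fst d, s * snd d))) (at (a,v))"
    by (auto intro!: derivative_eq_intros)
  have "((\<lambda>w. B (p + q * fst w, r + s * snd w)) has_derivative
     (\<lambda>d. (\<lambda>d. fst d * b1 + snd d * b2) (q * fst d, s * snd d))) (at (a,v))"
  proof -
    have a2: "(B has_derivative (\<lambda>d. fst d * b1 + snd d * b2)) (at ((\<lambda>w. (p + q * fst w, r + s * snd w)) (a,v)))"
      using assms by (simp add: D2_def)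
    show ?thesis using has_derivative_compose[OF inner a2] by simp
  qed
  then show ?thesis unfolding D2_def by (simp add: algebra_simps)
qed

lemma D2_transform: assumes "D2 B b1 b2 z" "0 < e" "\<And>w. dist w z < e \<Longrightarrow> B w = C w"
  shows "D2 C b1 b2 z"
  unfolding D2_def
proof (rule has_derivative_transform_within[of B _ z UNIV e])
  show "(B has_derivative (\<lambda>d. fst d * b1 + snd d * b2)) (at z within UNIV)" using assms(1) unfolding D2_def by simp
  show "0 < e" by (rule assms(2))
  show "z \<in> UNIV" by simp
  fix x' assume "dist x' z < e" then show "B x' = C x'" by (rule assms(3))
qed

lemma C1_onI:
  assumes "\<And>z. z \<in> S \<Longrightarrow> D2 B (b1 z) (b2 z) z" "continuous_on S b1" "continuous_on S b2"
  shows "C1_on S B"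
proof -
  have "continuous_on S (pdt B)" using assms(2) by (metis (no_types, lifting) D2_pd(1) assms(1) continuous_on_cong)
  moreover have "continuous_on S (pdx B)" using assms(3) by (metis (no_types, lifting) D2_pd(2) assms(1) continuous_on_cong)
  ultimately show ?thesis unfolding C1_on_def using D2_diff assms(1) by blast
qed

definition vanish :: "(real \<times> real \<Rightarrow> real) \<Rightarrow> bool" where
  "vanish B \<longleftrightarrow> (\<forall>a v. 1/4 \<le> \<bar>v\<bar> \<longrightarrow> \<bar>v\<bar> \<le> 3/4 \<longrightarrow> B (a, v) = 0)"

lemma per_local:
  assumes "vanish B" "\<bar>u - u0\<bar> < 1/4"
  shows "B (a, trep (u - x0)) = B (a, u - x0 - of_int \<lfloor>u0 - x0 + 1/2\<rfloor>)"
proof -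
  have "\<bar>(u - x0) - (u0 - x0)\<bar> < 1/4" using assms by simp
  from trep_local[OF this] show ?thesis
  proof
    assume "1/4 \<le> \<bar>trep (u - x0)\<bar> \<and> 1/4 \<le> \<bar>u - x0 - of_int \<lfloor>u0 - x0 + 1/2\<rfloor>\<bar> \<and> \<bar>u - x0 - of_int \<lfloor>u0 - x0 + 1/2\<rfloor>\<bar> \<le> 3/4"
    moreover have "\<bar>trep (u - x0)\<bar> \<le> 3/4" using trep_range[of "u - x0"] by auto
    ultimately show ?thesis using assms(1) unfolding vanish_def by auto
  qed simp
qed

lemma per_D2:
  assumes D: "\<And>w. D2 B (Bt w) (Bx w) w" and v: "vanish B" "vanish Bt" "vanish Bx"
  shows "D2 (\<lambda>w. B (fst w, trep (snd w - x0))) (Bt (fst z, trep (snd z - x0))) (Bx (fst z, trep (snd z - x0))) z"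
proof -
  obtain a0 u0 where z: "z = (a0, u0)" by (cases z)
  define k where "k = \<lfloor>u0 - x0 + 1/2\<rfloor>"
  have "D2 (\<lambda>w. B (0 + 1 * fst w, (- x0 - of_int k) + 1 * snd w)) (1 * Bt (a0, u0 - x0 - of_int k)) (1 * Bx (a0, u0 - x0 - of_int k)) (a0, u0)"
    by (rule D2_affine) (use D[of "(a0, u0 - x0 - of_int k)"] in \<open>simp add: algebra_simps\<close>)
  moreover have "(\<lambda>w. B (0 + 1 * fst w, (- x0 - of_int k) + 1 * snd w)) = (\<lambda>w. B (fst w, snd w - x0 - of_int k))"
    by (rule ext) (simp add: algebra_simps)
  moreover have "Bt (a0, u0 - x0 - of_int k) = Bt (a0, trep (u0 - x0))" "Bx (a0, u0 - x0 - of_int k) = Bx (a0, trep (u0 - x0))"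
    using per_local[OF v(2), of u0 u0 a0 x0] per_local[OF v(3), of u0 u0 a0 x0] unfolding k_def by simp_all
  ultimately have d: "D2 (\<lambda>w. B (fst w, snd w - x0 - of_int k)) (Bt (a0, trep (u0 - x0))) (Bx (a0, trep (u0 - x0))) (a0, u0)"
    by simp
  show ?thesis unfolding z
  proof (rule D2_transform[OF _ _ _])
    show "D2 (\<lambda>w. B (fst w, snd w - x0 - of_int k)) (Bt (fst (a0,u0), trep (snd (a0,u0) - x0))) (Bx (fst (a0,u0), trep (snd (a0,u0) - x0))) (a0, u0)"
      using d by simp
    show "(0::real) < 1/4" by simp
    fix w :: "real \<times> real" assume "dist w (a0, u0) < 1/4"
    then have "\<bar>snd w - u0\<bar> < 1/4" using dist_snd_le[of w "(a0,u0)"] by (simp add: dist_real_def)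
    then show "B (fst w, snd w - x0 - of_int k) = B (fst w, trep (snd w - x0))"
      using per_local[OF v(1), of "snd w" u0 "fst w" x0] unfolding k_def by simp
  qed
qed

lemma per_cont:
  assumes c: "continuous_on UNIV B" and v: "vanish B"
  shows "continuous_on UNIV (\<lambda>w. B (fst w, trep (snd w - x0)))"
proof (rule continuous_at_imp_continuous_on, intro ballI)
  fix z :: "real \<times> real"
  obtain a0 u0 where z: "z = (a0, u0)" by (cases z)
  define k where "k = \<lfloor>u0 - x0 + 1/2\<rfloor>"
  have ev: "eventually (\<lambda>w. B (fst w, snd w - x0 - of_int k) = B (fst w, trep (snd w - x0))) (nhds z)"
    unfolding eventually_nhds_metric
  proof (intro exI[of _ "1/4"] conjI allI impI)
    fix w :: "real \<times> real" assume "dist w z < 1/4"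
    then have "\<bar>snd w - u0\<bar> < 1/4" using dist_snd_le[of w z] z by (simp add: dist_real_def)
    then show "B (fst w, snd w - x0 - of_int k) = B (fst w, trep (snd w - x0))"
      using per_local[OF v, of "snd w" u0 "fst w" x0] unfolding k_def by simp
  qed simp
  have "isCont (\<lambda>w. B (fst w, snd w - x0 - of_int k)) z"
    by (intro continuous_on_interior[OF c] continuous_intros isCont_o2[where g=B]) auto
  then show "isCont (\<lambda>w. B (fst w, trep (snd w - x0))) z" using isCont_cong[OF ev] by simp
qed

definition clampu :: "real \<Rightarrow> real" where "clampu u = max (-1) (min 1 u)"
definition hh :: "real \<Rightarrow> real" where "hh u = cos (pi * clampu u / 2) ^ 2"
definition hh' :: "real \<Rightarrow> real" where "hh' u = - (pi / 2) * sin (pi * clampu u)"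

lemma hh_if: "hh u = (if u \<in> {-1<..<1} then cos (pi * u / 2) ^ 2 else 0)"
proof -
  consider "u \<le> -1" | "u \<ge> 1" | "u \<in> {-1<..<1}" by fastforce
  then show ?thesis
  proof cases
    case 1
    then have "clampu u = -1" unfolding clampu_def by simp
    then show ?thesis using 1 unfolding hh_def by (simp add: cos_minus)
  next
    case 2
    then have "clampu u = 1" unfolding clampu_def by simp
    then show ?thesis using 2 unfolding hh_def by simp
  next
    case 3
    then have "clampu u = u" unfolding clampu_def by simp
    then show ?thesis using 3 unfolding hh_def by simp
  qed
qed

lemma hh'_if: "hh' u = (if u \<in> {-1<..<1} then - (pi / 2) * sin (pi * u) else 0)"
proof -
  consider "u \<le> -1" | "u \<ge> 1" | "u \<in> {-1<..<1}" by fastforce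
  then show ?thesis
  proof cases
    case 1
    then have "clampu u = -1" unfolding clampu_def by simp
    then show ?thesis using 1 unfolding hh'_def by simp
  next
    case 2
    then have "clampu u = 1" unfolding clampu_def by simp
    then show ?thesis using 2 unfolding hh'_def by simp
  next
    case 3
    then have "clampu u = u" unfolding clampu_def by simp
    then show ?thesis using 3 unfolding hh'_def by simp
  qed
qed

lemma hh_zero: "1 \<le> \<bar>u\<bar> \<Longrightarrow> hh u = 0 \<and> hh' u = 0"
  unfolding hh_if hh'_if by auto

lemma hh_bounds: "0 \<le> hh u" "hh u \<le> 1" "\<bar>hh' u\<bar> \<le> 2"
proof -
  show "0 \<le> hh u" unfolding hh_def by simp
  have "\<bar>cos (pi * clampu u / 2)\<bar> \<le> 1" by (rule abs_cos_le_one)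
  then have "\<bar>cos (pi * clampu u / 2)\<bar> ^ 2 \<le> 1" by (intro power_le_one) simp_all
  then show "hh u \<le> 1" unfolding hh_def by (simp only: power2_abs)
  have "\<bar>sin (pi * clampu u)\<bar> \<le> 1" by (rule abs_sin_le_one)
  moreover have "pi / 2 < 2" using pi_less_4 by simp
  ultimately have "pi / 2 * \<bar>sin (pi * clampu u)\<bar> \<le> 2 * 1"
    by (intro mult_mono) auto
  then show "\<bar>hh' u\<bar> \<le> 2" unfolding hh'_def by (simp add: abs_mult)
qed

lemma cont_hh: "continuous_on UNIV hh" "continuous_on UNIV hh'"
  unfolding hh_def hh'_def clampu_def by (auto intro!: continuous_intros)

lemma hh_deriv: "(hh has_real_derivative hh' x) (at x)"
proof -
  let ?S = "{-1<..<1::real}" and ?T = "- {-1<..<1::real}"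
  let ?f = "\<lambda>u::real. cos (pi * u / 2) ^ 2" and ?f' = "\<lambda>x d::real. d * (- (pi / 2) * sin (pi * x))"
  have fd: "(?f has_derivative ?f' y) (at y within A)" for y A
  proof -
    have d1: "(?f has_real_derivative (2 * cos (pi * y / 2) * (- sin (pi * y / 2) * (pi / 2)))) (at y within A)"
      by (auto intro!: derivative_eq_intros)
    have e: "- (pi / 2) * sin (pi * y) = 2 * cos (pi * y / 2) * (- sin (pi * y / 2) * (pi / 2))"
      using sin_double[of "pi * y / 2"] by (simp add: algebra_simps)
    have "(?f has_real_derivative (- (pi / 2) * sin (pi * y))) (at y within A)"
      unfolding e by (rule d1)
    moreover have "(\<lambda>d. d * (- (pi / 2) * sin (pi * y))) = (*) (- (pi / 2) * sin (pi * y))"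
      by (auto simp: fun_eq_iff)
    ultimately show ?thesis unfolding has_field_derivative_def by simp
  qed
  have cT: "closure ?T \<subseteq> {u. 1 \<le> \<bar>u\<bar>}"
  proof (rule closure_minimal)
    show "?T \<subseteq> {u. 1 \<le> \<bar>u\<bar>}" by auto
    have "closed {u::real. 1 \<le> \<bar>u\<bar>}"
      by (rule closed_Collect_le) (intro continuous_intros)+
    then show "closed {u::real. 1 \<le> \<bar>u\<bar>}" .
  qed
  have clS: "closure ?S = {-1..1}" by simp
  have conn: "u \<in> closure ?S \<Longrightarrow> u \<in> closure ?T \<Longrightarrow> u = 1 \<or> u = -1" for u
    using cT clS by force
  have "((\<lambda>u. if u \<in> ?S then ?f u else 0) has_derivative (if x \<in> ?S then ?f' x else (\<lambda>d. 0))) (at x within ?S \<union> ?T)"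
  proof (rule has_derivative_If_within_closures)
    show "?f u = 0" if "u \<in> closure ?S" "u \<in> closure ?T" for u
      using conn[OF that] by (auto simp: cos_minus)
    show "?f' u = (\<lambda>d. 0)" if "u \<in> closure ?S" "u \<in> closure ?T" for u
      using conn[OF that] by auto
  next
    show "(?f has_derivative ?f' x) (at x within ?S \<union> (closure ?S \<inter> closure ?T))" by (rule fd)
    show "((\<lambda>u. 0) has_derivative (\<lambda>d. 0)) (at x within ?T \<union> (closure ?S \<inter> closure ?T))" by simp
    show "x \<in> ?S \<union> ?T" by simp
  qed
  moreover have "(\<lambda>u. if u \<in> ?S then ?f u else 0) = hh" by (auto simp: hh_if)
  moreover have "(if x \<in> ?S then ?f' x else (\<lambda>d. 0)) = (\<lambda>d. hh' x * d)" by (auto simp: hh'_if)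
  moreover have "?S \<union> ?T = UNIV" by auto
  ultimately show ?thesis unfolding has_field_derivative_def by simp
qed

lemma int_zero_aux:
  fixes c :: int and M \<theta> :: real
  assumes "M \<ge> 2" "0 \<le> \<theta>" "\<theta> < 1" "-M/2 \<le> \<theta> + M * c" "\<theta> + M * c < M/2"
  shows "c = 0"
proof (rule ccontr)
  assume "c \<noteq> 0"
  then have "c \<ge> 1 \<or> c \<le> -1" by linarith
  then show False
  proof
    assume "c \<ge> 1"
    then have "M * 1 \<le> M * c" using assms by (intro mult_left_mono) auto
    then show False using assms by linarith
  next
    assume "c \<le> -1"
    then have "M * c \<le> M * (-1)" using assms by (intro mult_left_mono) auto
    then show False using assms by linarith
  qed
qed

lemma int_zero_aux2:
  fixes c :: int and M \<theta> :: real
  assumes "M \<ge> 2" "0 \<le> \<theta>" "\<theta> < 1" "-M/2 \<le> \<theta> + (M * c - 1)" "\<theta> + (M * c - 1) < M/2"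
  shows "c = 0"
proof (rule ccontr)
  assume "c \<noteq> 0"
  then have "c \<ge> 1 \<or> c \<le> -1" by linarith
  then show False
  proof
    assume "c \<ge> 1"
    then have "M * 1 \<le> M * c" using assms by (intro mult_left_mono) auto
    then show False using assms by linarith
  next
    assume "c \<le> -1"
    then have "M * c \<le> M * (-1)" using assms by (intro mult_left_mono) auto
    then show False using assms by linarith
  qed
qed

lemma hh_partition:
  fixes M :: nat assumes M2: "M \<ge> 2"
  shows "(\<Sum>j<M. hh (real M * trep (y - real j / real M))) = 1"
proof -
  define m where "m = \<lfloor>real M * y\<rfloor>"
  define \<theta> where "\<theta> = real M * y - of_int m"
  have th: "0 \<le> \<theta>" "\<theta> < 1" unfolding \<theta>_def m_def by linarith+
  have Mpos: "real M > 0" using M2 by simp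
  define q where "q j = \<lfloor>y - real j / real M + 1/2\<rfloor>" for j :: nat
  define d where "d j = m - int j - int M * q j" for j :: nat
  have A: "real M * trep (y - real j / real M) = \<theta> + of_int (d j)" for j
    unfolding trep_def q_def[symmetric] d_def \<theta>_def using Mpos by (simp add: field_simps)
  have B: "- real M / 2 \<le> \<theta> + of_int (d j)" "\<theta> + of_int (d j) < real M / 2" for j
  proof -
    let ?r = "trep (y - real j / real M)"
    have r: "-1/2 \<le> ?r" "?r < 1/2" using trep_range by auto
    have "real M * (-1/2) \<le> real M * ?r" using r Mpos by (intro mult_left_mono) auto
    moreover have "real M * ?r < real M * (1/2)" using r Mpos by (intro mult_strict_left_mono) auto
    ultimately show "- real M / 2 \<le> \<theta> + of_int (d j)" "\<theta> + of_int (d j) < real M / 2"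
      using A[of j] by simp_all
  qed
  define j1 where "j1 = nat (m mod int M)"
  define j2 where "j2 = nat ((m + 1) mod int M)"
  have Mi: "int M > 0" using M2 by simp
  have j1: "int j1 = m mod int M" "j1 < M" unfolding j1_def using Mi by (simp_all add: nat_less_iff)
  have j2: "int j2 = (m + 1) mod int M" "j2 < M" unfolding j2_def using Mi by (simp_all add: nat_less_iff)
  have C0: "d j = 0 \<longleftrightarrow> j = j1" if "j < M" for j
  proof
    assume "d j = 0"
    then have "m = int j + int M * q j" unfolding d_def by simp
    then have "m mod int M = int j mod int M" by simp
    also have "\<dots> = int j" using that by simp
    finally show "j = j1" using j1 by simp
  next
    assume "j = j1"
    then have dj: "d j = int M * (m div int M - q j)" unfolding d_def using j1(1)
      by (simp add: algebra_simps minus_mod_eq_mult_div)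
    then have "real_of_int (d j) = real M * of_int (m div int M - q j)" by simp
    then have "m div int M - q j = 0" using int_zero_aux[of "real M" \<theta> "m div int M - q j"] B[of j] th M2 by simp
    then show "d j = 0" using dj by simp
  qed
  have C1: "d j = -1 \<longleftrightarrow> j = j2" if "j < M" for j
  proof
    assume "d j = -1"
    then have "m + 1 = int j + int M * q j" unfolding d_def by simp
    then have "(m + 1) mod int M = int j mod int M" by simp
    also have "\<dots> = int j" using that by simp
    finally show "j = j2" using j2 by simp
  next
    assume "j = j2"
    then have dj: "d j = -1 + int M * ((m + 1) div int M - q j)" unfolding d_def using j2(1)
      by (simp add: algebra_simps minus_mod_eq_mult_div)
    then have "real_of_int (d j) = -1 + real M * of_int ((m + 1) div int M - q j)" by simp
    then have "(m + 1) div int M - q j = 0"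
      using int_zero_aux2[of "real M" \<theta> "(m + 1) div int M - q j"] B[of j] th M2 by simp
    then show "d j = -1" using dj by simp
  qed
  have j12: "j1 \<noteq> j2"
  proof
    assume "j1 = j2"
    then have "int M dvd (m + 1) - m" using j1 j2 by (metis mod_eq_dvd_iff)
    then show False using M2 by simp
  qed
  have T: "hh (real M * trep (y - real j / real M)) =
      (if j = j1 then hh \<theta> else 0) + (if j = j2 then hh (\<theta> - 1) else 0)" if "j < M" for j
  proof -
    consider "j = j1" | "j = j2" | "j \<noteq> j1" "j \<noteq> j2" by blast
    then show ?thesis
    proof cases
      case 1 then show ?thesis using C0[OF that] A[of j] j12 by simp
    next
      case 2 then show ?thesis using C1[OF that] A[of j] j12 by simp
    next
      case 3
      then have "d j \<noteq> 0" "d j \<noteq> -1" using C0[OF that] C1[OF that] by auto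
      then have "d j \<ge> 1 \<or> d j \<le> -2" by linarith
      then have "1 \<le> \<bar>\<theta> + of_int (d j)\<bar>" using th by auto
      then show ?thesis using 3 A[of j] hh_zero by simp
    qed
  qed
  have "(\<Sum>j<M. hh (real M * trep (y - real j / real M))) =
      (\<Sum>j<M. (if j = j1 then hh \<theta> else 0) + (if j = j2 then hh (\<theta> - 1) else 0))"
    using T by (intro sum.cong) auto
  also have "\<dots> = hh \<theta> + hh (\<theta> - 1)"
    using j1 j2 by (simp add: sum.distrib)
  also have "\<dots> = 1"
  proof (cases "\<theta> = 0")
    case True then show ?thesis by (simp add: hh_if)
  next
    case False
    then have "hh \<theta> = cos (pi * \<theta> / 2) ^ 2" "hh (\<theta> - 1) = cos (pi * \<theta> / 2 - pi / 2) ^ 2"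
      using th by (simp_all add: hh_if algebra_simps diff_divide_distrib)
    moreover have "cos (pi * \<theta> / 2 - pi / 2) = sin (pi * \<theta> / 2)" by (simp add: cos_diff)
    ultimately show ?thesis by simp
  qed
  finally show ?thesis .
qed

lemma phi_deriv:
  assumes "smooth_on {0<..} \<phi>" "r > 0"
  shows "(\<phi> has_real_derivative deriv \<phi> r) (at r)"
proof -
  have "\<forall>k. \<forall>r\<in>{0<..}. ((deriv ^^ k) \<phi>) differentiable (at r)" using assms(1) unfolding smooth_on_def .
  then have "((deriv ^^ 0) \<phi>) differentiable (at r)" using assms(2) by blast
  then have "\<phi> differentiable (at r)" by simp
  then show ?thesis by (rule DERIV_deriv_iff_real_differentiable[THEN iffD2])
qed

lemma phi'_cont:
  assumes "smooth_on {0<..} \<phi>" "r > 0"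
  shows "isCont (deriv \<phi>) r"
proof -
  have "\<forall>k. \<forall>r\<in>{0<..}. ((deriv ^^ k) \<phi>) differentiable (at r)" using assms(1) unfolding smooth_on_def .
  then have "((deriv ^^ 1) \<phi>) differentiable (at r)" using assms(2) by blast
  then have "deriv \<phi> differentiable (at r)" by simp
  then show ?thesis by (rule differentiable_imp_continuous_within)
qed

lemma phi'_zero:
  assumes "smooth_on {0<..} \<phi>" "r > 0" "\<forall>r>0. 0 \<le> \<phi> r" "\<phi> r = 0"
  shows "deriv \<phi> r = 0"
proof (rule DERIV_local_min[OF phi_deriv[OF assms(1,2)] assms(2)], intro allI impI)
  fix y assume "\<bar>r - y\<bar> < r"
  then have "y > 0" by linarith
  then show "\<phi> r \<le> \<phi> y" using assms by auto
qed

lemma phi'_bound: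
  assumes "smooth_on {0<..} \<phi>" "\<forall>r>0. 0 \<le> \<phi> r"
    "\<forall>r>0. r \<notin> {1/16<..<1/4} \<longrightarrow> \<phi> r = 0"
  shows "\<exists>P. P \<ge> 0 \<and> (\<forall>r>0. \<bar>deriv \<phi> r\<bar> \<le> P)"
proof -
  have "continuous_on {1/16..1/4::real} (deriv \<phi>)"
    using phi'_cont[OF assms(1)] by (intro continuous_at_imp_continuous_on) auto
  then have "compact (deriv \<phi> ` {1/16..1/4})" by (intro compact_continuous_image) auto
  then have "bounded (deriv \<phi> ` {1/16..1/4})" by (rule compact_imp_bounded)
  then obtain P where P: "\<forall>y\<in>deriv \<phi> ` {1/16..1/4}. norm y \<le> P"
    unfolding bounded_iff by blast
  have "\<bar>deriv \<phi> r\<bar> \<le> max P 0" if "r > 0" for r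
  proof (cases "r \<in> {1/16..1/4}")
    case True then show ?thesis using P by force
  next
    case False
    then have "\<phi> r = 0" using assms(3) that by auto
    then have "deriv \<phi> r = 0" using phi'_zero[OF assms(1) that assms(2)] by simp
    then show ?thesis by simp
  qed
  then show ?thesis by (intro exI[of _ "max P 0"]) auto
qed

lemma C1c_zero: "C1c (\<lambda>w. 0)"
proof -
  have "C1_on UNIV (\<lambda>w::real\<times>real. 0::real)"
    by (rule C1_onI[of UNIV _ "\<lambda>z. 0" "\<lambda>z. 0"]) (simp_all add: D2_const)
  then show ?thesis unfolding C1c_def periodic_x_def by simp
qed

lemma C1c_lin:
  assumes "C1c f" "C1c g"
  shows "C1c (\<lambda>w. a * f w + b * g w)"
proof -
  obtain K1 where K1: "\<forall>t x. \<bar>t\<bar> > K1 \<longrightarrow> f (t, x) = 0" using assms(1) unfolding C1c_def by blast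
  obtain K2 where K2: "\<forall>t x. \<bar>t\<bar> > K2 \<longrightarrow> g (t, x) = 0" using assms(2) unfolding C1c_def by blast
  have Df: "D2 f (pdt f z) (pdx f z) z" for z
  proof -
    have "f differentiable (at z)" using assms(1) unfolding C1c_def C1_on_def by blast
    then show ?thesis by (rule D2_of_diff)
  qed
  have Dg: "D2 g (pdt g z) (pdx g z) z" for z
  proof -
    have "g differentiable (at z)" using assms(2) unfolding C1c_def C1_on_def by blast
    then show ?thesis by (rule D2_of_diff)
  qed
  have "C1_on UNIV (\<lambda>w. a * f w + b * g w)"
  proof (rule C1_onI[of UNIV _ "\<lambda>z. a * pdt f z + b * pdt g z" "\<lambda>z. a * pdx f z + b * pdx g z"])
    fix z :: "real \<times> real"
    show "D2 (\<lambda>w. a * f w + b * g w) (a * pdt f z + b * pdt g z) (a * pdx f z + b * pdx g z) z"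
      by (intro D2_add D2_cmult Df Dg)
  next
    show "continuous_on UNIV (\<lambda>z. a * pdt f z + b * pdt g z)"
      using assms unfolding C1c_def C1_on_def by (auto intro!: continuous_intros)
    show "continuous_on UNIV (\<lambda>z. a * pdx f z + b * pdx g z)"
      using assms unfolding C1c_def C1_on_def by (auto intro!: continuous_intros)
  qed
  moreover have "\<forall>t x. \<bar>t\<bar> > max K1 K2 \<longrightarrow> a * f (t, x) + b * g (t, x) = 0" using K1 K2 by auto
  moreover have "periodic_x (\<lambda>w. a * f w + b * g w)"
    using assms unfolding C1c_def periodic_x_def by simp
  ultimately show ?thesis unfolding C1c_def by blast
qed

lemma X_zero: assumes "linear_C1c X" shows "X (\<lambda>w. 0) = 0"
proof -
  have "X (\<lambda>w. 0 * (\<lambda>w. 0) w + 0 * (\<lambda>w. 0) w) = 0 * X (\<lambda>w. 0) + 0 * X (\<lambda>w. 0)"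
    using assms C1c_zero unfolding linear_C1c_def by blast
  then show ?thesis by simp
qed

lemma X_scale: assumes "linear_C1c X" "C1c f" shows "X (\<lambda>w. c * f w) = c * X f"
proof -
  have "X (\<lambda>w. c * f w + 0 * f w) = c * X f + 0 * X f"
    using assms unfolding linear_C1c_def by blast
  then show ?thesis by simp
qed

lemma X_sum:
  assumes X: "linear_C1c X" and fin: "finite S" and P: "\<And>j. j \<in> S \<Longrightarrow> C1c (P j)"
  shows "C1c (\<lambda>w. \<Sum>j\<in>S. P j w) \<and> X (\<lambda>w. \<Sum>j\<in>S. P j w) = (\<Sum>j\<in>S. X (P j))"
  using fin P
proof (induction S rule: finite_induct)
  case empty
  then show ?case using X_zero[OF X] C1c_zero by simp
next
  case (insert a S)
  have ca: "C1c (P a)" using insert by simp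
  have cS: "C1c (\<lambda>w. \<Sum>j\<in>S. P j w)" and xS: "X (\<lambda>w. \<Sum>j\<in>S. P j w) = (\<Sum>j\<in>S. X (P j))"
    using insert by auto
  have "C1c (\<lambda>w. 1 * P a w + 1 * (\<Sum>j\<in>S. P j w))" by (rule C1c_lin[OF ca cS])
  moreover have "X (\<lambda>w. 1 * P a w + 1 * (\<Sum>j\<in>S. P j w)) = 1 * X (P a) + 1 * X (\<lambda>w. \<Sum>j\<in>S. P j w)"
    using X ca cS unfolding linear_C1c_def by blast
  ultimately show ?case using insert xS by simp
qed

lemma holder_bound:
  assumes "X \<in> Calpha \<alpha>" "0 < \<delta>" "\<delta> \<le> 1" "z \<in> {-1..2} \<times> {-1/2..<1/2}" "g \<in> B1"
  shows "\<bar>X (scaleS \<delta> z g)\<bar> \<le> \<delta> powr \<alpha> * holder_norm \<alpha> X (-1) 2"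
proof -
  have "\<delta> powr (-\<alpha>) * \<bar>X (scaleS \<delta> z g)\<bar> \<in> holder_vals \<alpha> X (-1) 2"
    unfolding holder_vals_def mem_Collect_eq using assms(2-5)
    by (intro exI[of _ \<delta>] exI[of _ z] exI[of _ g]) auto
  moreover have "bdd_above (holder_vals \<alpha> X (-1) 2)" using assms(1) unfolding Calpha_def by auto
  ultimately have "\<delta> powr (-\<alpha>) * \<bar>X (scaleS \<delta> z g)\<bar> \<le> holder_norm \<alpha> X (-1) 2"
    unfolding holder_norm_def by (rule cSup_upper)
  then have "\<delta> powr \<alpha> * (\<delta> powr (-\<alpha>) * \<bar>X (scaleS \<delta> z g)\<bar>) \<le> \<delta> powr \<alpha> * holder_norm \<alpha> X (-1) 2"
    by (intro mult_left_mono) auto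
  moreover have "\<delta> powr \<alpha> * \<delta> powr (-\<alpha>) = 1" using assms(2) by (simp add: powr_add[symmetric])
  ultimately show ?thesis by (simp add: mult.assoc[symmetric])
qed

definition FF :: "(real \<times> real \<Rightarrow> real) \<Rightarrow> (real \<Rightarrow> real) \<Rightarrow> real \<Rightarrow> real \<times> real \<Rightarrow> real" where
  "FF f \<phi> c = (\<lambda>(t, x). if t > 0 then f (t, x) * \<phi> (c * t) else 0)"
definition FF1 :: "(real \<times> real \<Rightarrow> real) \<Rightarrow> (real \<Rightarrow> real) \<Rightarrow> real \<Rightarrow> real \<times> real \<Rightarrow> real" where
  "FF1 f \<phi> c = (\<lambda>(t, x). if t > 0 then pdt f (t, x) * \<phi> (c * t) + f (t, x) * (c * deriv \<phi> (c * t)) else 0)"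
definition FF2 :: "(real \<times> real \<Rightarrow> real) \<Rightarrow> (real \<Rightarrow> real) \<Rightarrow> real \<Rightarrow> real \<times> real \<Rightarrow> real" where
  "FF2 f \<phi> c = (\<lambda>(t, x). if t > 0 then pdx f (t, x) * \<phi> (c * t) else 0)"

lemma D2_cong: "D2 B b1 b2 z \<Longrightarrow> b1 = b1' \<Longrightarrow> b2 = b2' \<Longrightarrow> D2 B b1' b2' z" by simp

locale pset =
  fixes \<phi> :: "real \<Rightarrow> real" and f :: "real \<times> real \<Rightarrow> real" and c :: real
  assumes sm: "smooth_on {0<..} \<phi>"
    and rng: "\<forall>r>0. 0 \<le> \<phi> r \<and> \<phi> r \<le> 1"
    and supp: "\<forall>r>0. r \<notin> {1/16<..<1/4} \<longrightarrow> \<phi> r = 0"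
    and fper: "\<forall>t>0. \<forall>x. f (t, x + 1) = f (t, x)"
    and fC1: "C1_on ({0<..} \<times> UNIV) f"
    and c1: "c \<ge> 1"
begin

lemma phi_zero2: assumes "r > 0" "r \<notin> {1/16<..<1/4}" shows "\<phi> r = 0 \<and> deriv \<phi> r = 0"
proof -
  have p: "\<phi> r = 0" using supp assms by blast
  have "\<forall>r>0. 0 \<le> \<phi> r" using rng by blast
  then have "deriv \<phi> r = 0" using phi'_zero[OF sm assms(1) _ p] by blast
  then show ?thesis using p by simp
qed

lemma phi_zero': "r > 0 \<Longrightarrow> r \<le> 1/16 \<Longrightarrow> \<phi> r = 0 \<and> deriv \<phi> r = 0"
  by (rule phi_zero2) auto

lemma f_per_nat: "t > 0 \<Longrightarrow> f (t, x + real k) = f (t, x)"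
proof (induction k)
  case (Suc k)
  have "f (t, x + real (Suc k)) = f (t, (x + real k) + 1)" by (simp add: algebra_simps)
  also have "\<dots> = f (t, x + real k)" using fper Suc by blast
  finally show ?case using Suc by simp
qed simp

lemma f_per: "t > 0 \<Longrightarrow> f (t, x + of_int k) = f (t, x)"
proof (cases "k \<ge> 0")
  case True
  then obtain m where "k = int m" by (metis nonneg_eq_int)
  then show "t > 0 \<Longrightarrow> ?thesis" using f_per_nat by simp
next
  case False
  obtain m where m: "k = - int m" using False by (intro that[of "nat (-k)"]) simp
  assume t: "t > 0"
  have "f (t, x) = f (t, (x - real m) + real m)" by simp
  also have "\<dots> = f (t, x - real m)" using f_per_nat[OF t] by blast
  finally show ?thesis using m by simp
qed

lemma f_D2: "t > 0 \<Longrightarrow> D2 f (pdt f (t, x)) (pdx f (t, x)) (t, x)"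
  using fC1 unfolding C1_on_def by (auto intro: D2_of_diff)

lemma pd_per:
  assumes t: "t > 0"
  shows "pdt f (t, x + of_int k) = pdt f (t, x) \<and> pdx f (t, x + of_int k) = pdx f (t, x)"
proof -
  have "D2 (\<lambda>w. f (0 + 1 * fst w, of_int k + 1 * snd w)) (1 * pdt f (t, x + of_int k)) (1 * pdx f (t, x + of_int k)) (t, x)"
    by (rule D2_affine) (use f_D2[OF t, of "x + of_int k"] in \<open>simp add: add.commute\<close>)
  then have "D2 (\<lambda>w. f (fst w, of_int k + snd w)) (pdt f (t, x + of_int k)) (pdx f (t, x + of_int k)) (t, x)"
    by simp
  then have "D2 f (pdt f (t, x + of_int k)) (pdx f (t, x + of_int k)) (t, x)"
  proof (rule D2_transform[OF _ t])
    fix w :: "real \<times> real" assume "dist w (t, x) < t"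
    then have "\<bar>fst w - t\<bar> < t" using dist_fst_le[of w "(t,x)"] by (simp add: dist_real_def)
    then have "fst w > 0" by linarith
    then show "f (fst w, of_int k + snd w) = f w" using f_per[of "fst w" "snd w" k] by (simp add: add.commute)
  qed
  note dd = this
  show ?thesis using D2_pd[OF f_D2[OF t, of x]] D2_pd[OF dd] by simp
qed

abbreviation "F \<equiv> FF f \<phi> c"
abbreviation "F1 \<equiv> FF1 f \<phi> c"
abbreviation "F2 \<equiv> FF2 f \<phi> c"

lemma F_zero_small:
  assumes "fst w < 1 / (16 * c)"
  shows "F w = 0 \<and> F1 w = 0 \<and> F2 w = 0"
proof (cases "fst w > 0")
  case True
  have "c * fst w < c * (1 / (16 * c))" using assms c1 by (intro mult_strict_left_mono) auto
  then have "c * fst w \<le> 1/16" using c1 by simp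
  moreover have "c * fst w > 0" using True c1 by simp
  ultimately show ?thesis using phi_zero'[of "c * fst w"] unfolding FF_def FF1_def FF2_def
    by (cases w) auto
next
  case False
  then show ?thesis unfolding FF_def FF1_def FF2_def by (cases w) auto
qed

lemma F_supp:
  assumes "F (t, x) \<noteq> 0 \<or> F1 (t, x) \<noteq> 0 \<or> F2 (t, x) \<noteq> 0"
  shows "t > 0 \<and> 1/16 < c * t \<and> c * t < 1/4"
proof -
  have t: "t > 0" using assms unfolding FF_def FF1_def FF2_def by (auto split: if_splits)
  then have ct: "c * t > 0" using c1 by simp
  have "c * t \<in> {1/16<..<1/4}"
  proof (rule ccontr)
    assume "c * t \<notin> {1/16<..<1/4}"
    then have "\<phi> (c * t) = 0 \<and> deriv \<phi> (c * t) = 0" using phi_zero2[OF ct] by blast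
    then show False using assms t unfolding FF_def FF1_def FF2_def by simp
  qed
  then show ?thesis using t by simp
qed

lemma F_D2: "D2 F (F1 z) (F2 z) z"
proof (cases "fst z > 0")
  case True
  obtain t x where z: "z = (t, x)" by (cases z)
  have t: "t > 0" using True z by simp
  have dphi: "((\<lambda>s. \<phi> (c * s)) has_real_derivative deriv \<phi> (c * t) * c) (at t)"
    by (rule DERIV_chain2[OF phi_deriv[OF sm]]) (use t c1 in \<open>auto intro!: derivative_eq_intros\<close>)
  have A: "D2 f (pdt f z) (pdx f z) z" using f_D2[OF t, of x] z by simp
  have Bp: "D2 (\<lambda>w. \<phi> (c * fst w)) (deriv \<phi> (c * t) * c) 0 z"
    using D2_fst_fun[of "\<lambda>s. \<phi> (c * s)" "deriv \<phi> (c * t) * c" z] dphi z by simp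
  have "D2 (\<lambda>w. f w * \<phi> (c * fst w)) (f z * (deriv \<phi> (c * t) * c) + pdt f z * \<phi> (c * t))
      (f z * 0 + pdx f z * \<phi> (c * t)) z"
    by (rule D2_cong[OF D2_mult[OF A Bp]]) (simp_all add: z)
  then have "D2 F (f z * (deriv \<phi> (c * t) * c) + pdt f z * \<phi> (c * t)) (f z * 0 + pdx f z * \<phi> (c * t)) z"
  proof (rule D2_transform[OF _ t])
    fix w :: "real \<times> real" assume "dist w z < t"
    then have "\<bar>fst w - t\<bar> < t" using dist_fst_le[of w z] z by (simp add: dist_real_def)
    then have "fst w > 0" by linarith
    then show "f w * \<phi> (c * fst w) = F w" unfolding FF_def by (cases w) auto
  qed
  then show ?thesis by (rule D2_cong) (simp_all add: z t FF1_def FF2_def algebra_simps)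
next
  case False
  have e: "1 / (16 * c) > 0" using c1 by simp
  have "D2 F 0 0 z"
  proof (rule D2_transform[OF D2_const e])
    fix w :: "real \<times> real" assume "dist w z < 1 / (16 * c)"
    then have "\<bar>fst w - fst z\<bar> < 1 / (16 * c)" using dist_fst_le[of w z] by (simp add: dist_real_def)
    then have "fst w < 1 / (16 * c)" using False by linarith
    then show "0 = F w" using F_zero_small by simp
  qed
  then show ?thesis using False unfolding FF1_def FF2_def by (cases z) auto
qed

lemma F_cont_aux:
  fixes G H :: "real \<times> real \<Rightarrow> real"
  assumes G: "\<And>w. fst w > 0 \<Longrightarrow> G w = H w" "\<And>w. fst w < 1 / (16 * c) \<Longrightarrow> G w = 0"
    and H: "\<And>z. fst z > 0 \<Longrightarrow> isCont H z"
  shows "continuous_on UNIV G"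
proof (rule continuous_at_imp_continuous_on, intro ballI)
  fix z :: "real \<times> real"
  show "isCont G z"
  proof (cases "fst z > 0")
    case True
    have "open {w :: real \<times> real. fst w > 0}" by (intro open_Collect_less continuous_intros)
    then have "eventually (\<lambda>w. fst w > 0) (nhds z)" using True eventually_nhds_in_open by fastforce
    then have "eventually (\<lambda>w. H w = G w) (nhds z)" by (rule eventually_mono) (use G in auto)
    then show ?thesis using H[OF True] isCont_cong by blast
  next
    case False
    have "open {w :: real \<times> real. fst w < 1 / (16 * c)}" by (intro open_Collect_less continuous_intros)
    moreover have "fst z < 1 / (16 * c)" using False c1 by (smt (verit) divide_pos_pos)
    ultimately have "eventually (\<lambda>w. fst w < 1 / (16 * c)) (nhds z)" using eventually_nhds_in_open by fastforce
    then have "eventually (\<lambda>w. (\<lambda>w. 0) w = G w) (nhds z)" by (rule eventually_mono) (use G in auto)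
    then show ?thesis using isCont_cong[of "\<lambda>w. 0" G z] by simp
  qed
qed

lemma isCont_pd:
  fixes z :: "real \<times> real"
  assumes "fst z > 0" shows "isCont (pdt f) z" "isCont (pdx f) z" "isCont f z"
proof -
  have o: "open ({0<..} \<times> UNIV :: (real \<times> real) set)" by (intro open_Times open_greaterThan open_UNIV)
  have zin: "z \<in> ({0<..} \<times> UNIV :: (real \<times> real) set)" using assms by (cases z) auto
  have c1: "continuous_on ({0<..} \<times> UNIV) (pdt f)" and c2: "continuous_on ({0<..} \<times> UNIV) (pdx f)"
    and d: "\<forall>z\<in>{0<..} \<times> UNIV. f differentiable (at z)"
    using fC1 unfolding C1_on_def by blast+
  show "isCont (pdt f) z" using continuous_on_eq_continuous_at[OF o, THEN iffD1, OF c1] zin by blast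
  show "isCont (pdx f) z" using continuous_on_eq_continuous_at[OF o, THEN iffD1, OF c2] zin by blast
  have "f differentiable (at z)" using d zin by blast
  then show "isCont f z" by (rule differentiable_imp_continuous_within)
qed

lemma isCont_phi:
  fixes z :: "real \<times> real"
  assumes "fst z > 0" shows "isCont (\<lambda>w. \<phi> (c * fst w)) z" "isCont (\<lambda>w. deriv \<phi> (c * fst w)) z"
proof -
  have p: "c * fst z > 0" using assms c1 by simp
  have i: "isCont (\<lambda>w::real\<times>real. c * fst w) z" by (intro continuous_intros)
  have "isCont \<phi> (c * fst z)" using phi_deriv[OF sm p] by (rule DERIV_isCont)
  then show "isCont (\<lambda>w. \<phi> (c * fst w)) z" using isCont_o2[OF i] by blast
  show "isCont (\<lambda>w. deriv \<phi> (c * fst w)) z"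
    using phi'_cont[OF sm p] isCont_o2[OF i] by blast
qed

lemma F_cont: "continuous_on UNIV F" "continuous_on UNIV F1" "continuous_on UNIV F2"
proof -
  show "continuous_on UNIV F1"
  proof (rule F_cont_aux[where H="\<lambda>w. pdt f w * \<phi> (c * fst w) + f w * (c * deriv \<phi> (c * fst w))"])
    fix w :: "real \<times> real" assume "fst w > 0" then show "F1 w = pdt f w * \<phi> (c * fst w) + f w * (c * deriv \<phi> (c * fst w))"
      by (cases w) (simp add: FF1_def)
  next
    fix w :: "real \<times> real" assume "fst w < 1 / (16 * c)" then show "F1 w = 0" using F_zero_small by simp
  next
    fix z :: "real \<times> real" assume "fst z > 0"
    then show "isCont (\<lambda>w. pdt f w * \<phi> (c * fst w) + f w * (c * deriv \<phi> (c * fst w))) z"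
      by (intro continuous_intros isCont_pd isCont_phi)
  qed
  show "continuous_on UNIV F2"
  proof (rule F_cont_aux[where H="\<lambda>w. pdx f w * \<phi> (c * fst w)"])
    fix w :: "real \<times> real" assume "fst w > 0" then show "F2 w = pdx f w * \<phi> (c * fst w)"
      by (cases w) (simp add: FF2_def)
  next
    fix w :: "real \<times> real" assume "fst w < 1 / (16 * c)" then show "F2 w = 0" using F_zero_small by simp
  next
    fix z :: "real \<times> real" assume "fst z > 0"
    then show "isCont (\<lambda>w. pdx f w * \<phi> (c * fst w)) z"
      by (intro continuous_intros isCont_pd isCont_phi)
  qed
  show "continuous_on UNIV F"
  proof (rule F_cont_aux[where H="\<lambda>w. f w * \<phi> (c * fst w)"])
    fix w :: "real \<times> real" assume "fst w > 0" then show "F w = f w * \<phi> (c * fst w)"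
      by (cases w) (simp add: FF_def)
  next
    fix w :: "real \<times> real" assume "fst w < 1 / (16 * c)" then show "F w = 0" using F_zero_small by simp
  next
    fix z :: "real \<times> real" assume "fst z > 0"
    then show "isCont (\<lambda>w. f w * \<phi> (c * fst w)) z"
      by (intro continuous_intros isCont_pd isCont_phi)
  qed
qed

lemma F_per: "F (t, x + of_int k) = F (t, x)"
  unfolding FF_def using f_per by auto

end

definition PER :: "(real \<times> real \<Rightarrow> real) \<Rightarrow> real \<Rightarrow> real \<times> real \<Rightarrow> real" where
  "PER B x0 = (\<lambda>w. B (fst w, trep (snd w - x0)))"

definition BB :: "(real \<times> real \<Rightarrow> real) \<Rightarrow> real \<Rightarrow> real \<Rightarrow> real \<Rightarrow> real \<Rightarrow> real \<Rightarrow> real \<times> real \<Rightarrow> real" where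
  "BB G p q r s K = (\<lambda>w. G (p + q * fst w, r + s * snd w) * hh (K * snd w))"
definition BBt :: "(real \<times> real \<Rightarrow> real) \<Rightarrow> real \<Rightarrow> real \<Rightarrow> real \<Rightarrow> real \<Rightarrow> real \<Rightarrow> real \<times> real \<Rightarrow> real" where
  "BBt G1 p q r s K = (\<lambda>w. q * G1 (p + q * fst w, r + s * snd w) * hh (K * snd w))"
definition BBx :: "(real \<times> real \<Rightarrow> real) \<Rightarrow> (real \<times> real \<Rightarrow> real) \<Rightarrow> real \<Rightarrow> real \<Rightarrow> real \<Rightarrow> real \<Rightarrow> real \<Rightarrow> real \<times> real \<Rightarrow> real" where
  "BBx G G2 p q r s K = (\<lambda>w. s * G2 (p + q * fst w, r + s * snd w) * hh (K * snd w)
      + G (p + q * fst w, r + s * snd w) * (K * hh' (K * snd w)))"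

lemma PER_C1:
  assumes D: "\<And>w. D2 B (Bt w) (Bx w) w" and v: "vanish B" "vanish Bt" "vanish Bx"
    and c: "continuous_on UNIV Bt" "continuous_on UNIV Bx"
  shows "C1_on UNIV (\<lambda>w. k * PER B x0 w)"
    "pdt (\<lambda>w. k * PER B x0 w) w = k * PER Bt x0 w"
    "pdx (\<lambda>w. k * PER B x0 w) w = k * PER Bx x0 w"
    "periodic_x (\<lambda>w. k * PER B x0 w)"
proof -
  have d: "D2 (\<lambda>w. k * PER B x0 w) (k * PER Bt x0 z) (k * PER Bx x0 z) z" for z
    unfolding PER_def by (intro D2_cmult per_D2[OF D v])
  show "C1_on UNIV (\<lambda>w. k * PER B x0 w)"
  proof (rule C1_onI[of UNIV _ "\<lambda>z. k * PER Bt x0 z" "\<lambda>z. k * PER Bx x0 z"])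
    show "D2 (\<lambda>w. k * PER B x0 w) (k * PER Bt x0 z) (k * PER Bx x0 z) z" for z by (rule d)
    show "continuous_on UNIV (\<lambda>z. k * PER Bt x0 z)" unfolding PER_def
      by (intro continuous_on_mult_left per_cont c v)
    show "continuous_on UNIV (\<lambda>z. k * PER Bx x0 z)" unfolding PER_def
      by (intro continuous_on_mult_left per_cont c v)
  qed
  show "pdt (\<lambda>w. k * PER B x0 w) w = k * PER Bt x0 w" "pdx (\<lambda>w. k * PER B x0 w) w = k * PER Bx x0 w"
    using D2_pd[OF d] by auto
  show "periodic_x (\<lambda>w. k * PER B x0 w)"
  proof -
    have "trep (x + 1 - x0) = trep (x - x0)" for x using trep_period1[of "x - x0"] by (simp add: algebra_simps)
    then show ?thesis unfolding periodic_x_def PER_def by simp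
  qed
qed

lemma hhK_zero: assumes "K \<ge> 4" "1/4 \<le> \<bar>v\<bar>" shows "hh (K * v) = 0 \<and> hh' (K * v) = 0"
proof -
  have "4 * (1/4) \<le> K * \<bar>v\<bar>" using assms by (intro mult_mono) auto
  then have "1 \<le> \<bar>K * v\<bar>" using assms by (simp add: abs_mult)
  then show ?thesis by (rule hh_zero)
qed

context pset begin

lemma BB_props:
  assumes K: "K \<ge> 4"
  shows "D2 (BB F p q r s K) (BBt F1 p q r s K w) (BBx F F2 p q r s K w) w"
    "vanish (BB F p q r s K)" "vanish (BBt F1 p q r s K)" "vanish (BBx F F2 p q r s K)"
    "continuous_on UNIV (BBt F1 p q r s K)" "continuous_on UNIV (BBx F F2 p q r s K)"
proof -
  obtain a v where w: "w = (a, v)" by (cases w)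
  have dF: "D2 (\<lambda>w. F (p + q * fst w, r + s * snd w)) (q * F1 (p + q * a, r + s * v)) (s * F2 (p + q * a, r + s * v)) (a, v)"
    by (rule D2_affine) (rule F_D2)
  have dh': "((\<lambda>v. hh (K * v)) has_real_derivative hh' (K * v) * K) (at v)"
    by (rule DERIV_chain2[OF hh_deriv]) (auto intro!: derivative_eq_intros)
  have dh: "D2 (\<lambda>w. hh (K * snd w)) 0 (hh' (K * v) * K) (a, v)"
    using D2_snd_fun[of "\<lambda>v. hh (K * v)" "hh' (K * v) * K" "(a, v)"] dh' by simp
  show "D2 (BB F p q r s K) (BBt F1 p q r s K w) (BBx F F2 p q r s K w) w"
    unfolding BB_def BBt_def BBx_def w
    by (rule D2_cong[OF D2_mult[OF dF dh]]) (simp_all add: algebra_simps)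
  show "vanish (BB F p q r s K)" "vanish (BBt F1 p q r s K)" "vanish (BBx F F2 p q r s K)"
    unfolding vanish_def BB_def BBt_def BBx_def using hhK_zero[OF K] by simp_all
  have cF: "continuous_on UNIV (\<lambda>w::real\<times>real. G (p + q * fst w, r + s * snd w))"
    if "continuous_on UNIV G" for G :: "real \<times> real \<Rightarrow> real"
    by (rule continuous_on_compose2[OF that]) (auto intro!: continuous_intros)
  have ch: "continuous_on UNIV (\<lambda>w::real\<times>real. hh (K * snd w))" "continuous_on UNIV (\<lambda>w::real\<times>real. hh' (K * snd w))"
    by (rule continuous_on_compose2[OF cont_hh(1)] continuous_on_compose2[OF cont_hh(2)]; auto intro!: continuous_intros)+
  show "continuous_on UNIV (BBt F1 p q r s K)" unfolding BBt_def
    by (intro continuous_intros cF F_cont ch)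
  show "continuous_on UNIV (BBx F F2 p q r s K)" unfolding BBx_def
    by (intro continuous_intros cF F_cont ch)
qed

end

context pset begin

lemma F_bounds:
  assumes b: "\<forall>t>0. \<forall>x. \<bar>f (t, x)\<bar> \<le> S0 \<and> \<bar>pdt f (t, x)\<bar> \<le> S1 \<and> \<bar>pdx f (t, x)\<bar> \<le> S2"
    and Pb: "\<forall>r>0. \<bar>deriv \<phi> r\<bar> \<le> Pb"
  shows "\<bar>F w\<bar> \<le> S0" "\<bar>F1 w\<bar> \<le> S1 + S0 * c * Pb" "\<bar>F2 w\<bar> \<le> S2"
proof -
  obtain t x where w: "w = (t, x)" by (cases w)
  have S: "0 \<le> S0" "0 \<le> S1" "0 \<le> S2" using b[rule_format, of 1 0] by auto
  have Pb0: "0 \<le> Pb" using Pb[rule_format, of 1] by auto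
  show "\<bar>F w\<bar> \<le> S0"
  proof (cases "t > 0")
    case True
    have ph: "0 \<le> \<phi> (c * t)" "\<phi> (c * t) \<le> 1" using rng True c1 by auto
    have "\<bar>f (t, x) * \<phi> (c * t)\<bar> \<le> S0 * 1" unfolding abs_mult
      using b True ph S by (intro mult_mono) auto
    then show ?thesis using True w unfolding FF_def by simp
  qed (use w S in \<open>simp add: FF_def\<close>)
  show "\<bar>F2 w\<bar> \<le> S2"
  proof (cases "t > 0")
    case True
    have ph: "0 \<le> \<phi> (c * t)" "\<phi> (c * t) \<le> 1" using rng True c1 by auto
    have "\<bar>pdx f (t, x) * \<phi> (c * t)\<bar> \<le> S2 * 1" unfolding abs_mult
      using b True ph S by (intro mult_mono) auto
    then show ?thesis using True w unfolding FF2_def by simp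
  qed (use w S in \<open>simp add: FF2_def\<close>)
  show "\<bar>F1 w\<bar> \<le> S1 + S0 * c * Pb"
  proof (cases "t > 0")
    case True
    have ct: "c * t > 0" using True c1 by simp
    have ph: "0 \<le> \<phi> (c * t)" "\<phi> (c * t) \<le> 1" using rng True c1 by auto
    have a1: "\<bar>pdt f (t, x) * \<phi> (c * t)\<bar> \<le> S1 * 1" unfolding abs_mult
      using b True ph S by (intro mult_mono) auto
    have "\<bar>deriv \<phi> (c * t)\<bar> \<le> Pb" using Pb ct by blast
    then have "\<bar>c * deriv \<phi> (c * t)\<bar> \<le> c * Pb" using c1 by (simp add: abs_mult)
    then have a2: "\<bar>f (t, x) * (c * deriv \<phi> (c * t))\<bar> \<le> S0 * (c * Pb)" unfolding abs_mult[of "f (t,x)"]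
      using b True S by (intro mult_mono) auto
    have "\<bar>pdt f (t, x) * \<phi> (c * t) + f (t, x) * (c * deriv \<phi> (c * t))\<bar> \<le> S1 * 1 + S0 * (c * Pb)"
      using a1 a2 abs_triangle_ineq order_trans add_mono by fastforce
    then show ?thesis using True w unfolding FF1_def by (simp add: mult.assoc)
  qed (use w S Pb0 c1 in \<open>simp add: FF1_def\<close>)
qed

end

lemma supnorm_le: "(\<And>w. \<bar>h w\<bar> \<le> A) \<Longrightarrow> supnorm UNIV h \<le> A"
  unfolding supnorm_def by (rule cSUP_least) auto

context pset begin

lemma P_C1c:
  assumes M: "M \<ge> 4"
  shows "C1c (\<lambda>w. 1 * PER (BB F 0 1 r 1 M) r w)"
proof -
  note bp = BB_props[OF M, of 0 1 r 1]
  have c: "C1_on UNIV (\<lambda>w. 1 * PER (BB F 0 1 r 1 M) r w)" "periodic_x (\<lambda>w. 1 * PER (BB F 0 1 r 1 M) r w)"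
    using PER_C1[OF bp(1) bp(2-6)] by blast+
  have "\<forall>t x. \<bar>t\<bar> > 1 \<longrightarrow> 1 * PER (BB F 0 1 r 1 M) r (t, x) = 0"
  proof (intro allI impI)
    fix t x :: real assume t: "\<bar>t\<bar> > 1"
    have "F (t, r + trep (x - r)) = 0"
    proof (rule ccontr)
      assume "F (t, r + trep (x - r)) \<noteq> 0"
      then have "t > 0 \<and> c * t < 1/4" using F_supp by blast
      moreover have "1 * t \<le> c * t" using c1 calculation by (intro mult_right_mono) auto
      ultimately show False using t by linarith
    qed
    then show "1 * PER (BB F 0 1 r 1 M) r (t, x) = 0" unfolding PER_def BB_def by simp
  qed
  then show ?thesis using c unfolding C1c_def by blast
qed

lemma g_B1:
  assumes cd: "\<delta> = 1 / c" and t0: "t0 = 5 / (32 * c)" and Kc: "Kc > 0"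
    and b: "\<forall>t>0. \<forall>x. \<bar>f (t, x)\<bar> \<le> S0 \<and> \<bar>pdt f (t, x)\<bar> \<le> S1 \<and> \<bar>pdx f (t, x)\<bar> \<le> S2"
    and Pb: "\<forall>r>0. \<bar>deriv \<phi> r\<bar> \<le> Pb"
    and KB: "Kc * (S0 * (17 + Pb) + S1 + S2) \<le> 1"
  shows "(\<lambda>w. Kc * PER (BB F t0 \<delta> r \<delta> 8) 0 w) \<in> B1"
proof -
  let ?g = "\<lambda>w. Kc * PER (BB F t0 \<delta> r \<delta> 8) 0 w"
  note bp = BB_props[of 8 t0 \<delta> r \<delta>, simplified]
  note pc = PER_C1[OF bp(1) bp(2-6), of Kc 0]
  have S: "0 \<le> S0" "0 \<le> S1" "0 \<le> S2" using b[rule_format, of 1 0] by auto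
  have Pb0: "0 \<le> Pb" using Pb[rule_format, of 1] by auto
  have dpos: "\<delta> > 0" "\<delta> \<le> 1" "\<delta> * c = 1" using cd c1 by auto
  have Fb: "\<bar>F w\<bar> \<le> S0" "\<bar>F1 w\<bar> \<le> S1 + S0 * c * Pb" "\<bar>F2 w\<bar> \<le> S2" for w
    using F_bounds[OF b Pb] by auto
  have supp_a: "\<bar>a\<bar> < 3/32" if "F (t0 + \<delta> * a, y) \<noteq> 0" for a y
  proof -
    have "1/16 < c * (t0 + \<delta> * a) \<and> c * (t0 + \<delta> * a) < 1/4" using F_supp that by blast
    moreover have "c * (t0 + \<delta> * a) = 5/32 + a" using c1 cd t0 by (simp add: field_simps)
    ultimately show ?thesis by auto
  qed
  have gval: "?g (a, u) = Kc * (F (t0 + \<delta> * a, r + \<delta> * trep u) * hh (8 * trep u))" for a u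
    unfolding PER_def BB_def by simp
  have C1c: "C1c ?g"
  proof -
    have "\<forall>t x. \<bar>t\<bar> > 1 \<longrightarrow> ?g (t, x) = 0"
    proof (intro allI impI)
      fix t x :: real assume t: "\<bar>t\<bar> > 1"
      show "?g (t, x) = 0" using supp_a[of t] t unfolding gval by fastforce
    qed
    then show ?thesis using pc unfolding C1c_def by blast
  qed
  have ball: "\<forall>w. ?g w \<noteq> 0 \<longrightarrow> w \<in> ballRT (0, 0) (1/4)"
  proof (intro allI impI)
    fix w assume nz: "?g w \<noteq> 0"
    obtain a u where w: "w = (a, u)" by (cases w)
    have "F (t0 + \<delta> * a, r + \<delta> * trep u) \<noteq> 0" "hh (8 * trep u) \<noteq> 0" using nz w gval by auto
    then have "\<bar>a\<bar> < 3/32" "\<bar>8 * trep u\<bar> < 1" using supp_a hh_zero by (blast, force)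
    then have "\<bar>a\<bar> + \<bar>trep u\<bar> < 1/4" by (simp add: abs_mult)
    then show "w \<in> ballRT (0, 0) (1/4)" unfolding ballRT_def dRT_def dT_def w
      using abs_trep_neg[of u] by simp
  qed
  have h01: "0 \<le> hh y" "hh y \<le> 1" "\<bar>hh' y\<bar> \<le> 2" for y using hh_bounds by auto
  have s0: "\<bar>?g w\<bar> \<le> Kc * S0" for w
  proof -
    obtain a u where w: "w = (a, u)" by (cases w)
    have "\<bar>F (t0 + \<delta> * a, r + \<delta> * trep u) * hh (8 * trep u)\<bar> \<le> S0 * 1"
      unfolding abs_mult using Fb h01 S by (intro mult_mono) auto
    then show ?thesis using Kc unfolding w gval abs_mult by (simp add: mult_left_mono)
  qed
  have s1: "\<bar>pdt ?g w\<bar> \<le> Kc * (S1 + S0 * Pb)" for w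
  proof -
    obtain a u where w: "w = (a, u)" by (cases w)
    let ?p = "(t0 + \<delta> * a, r + \<delta> * trep u)"
    have e: "pdt ?g w = Kc * (\<delta> * F1 ?p * hh (8 * trep u))"
      using pc(2)[of w] unfolding w PER_def BBt_def by simp
    have "\<bar>F1 ?p * hh (8 * trep u)\<bar> \<le> (S1 + S0 * c * Pb) * 1"
      unfolding abs_mult using Fb h01 S Pb0 c1 by (intro mult_mono) auto
    then have "\<delta> * \<bar>F1 ?p * hh (8 * trep u)\<bar> \<le> \<delta> * (S1 + S0 * c * Pb)"
      using dpos by (intro mult_left_mono) auto
    also have "\<dots> = \<delta> * S1 + S0 * Pb * (\<delta> * c)" by (simp add: algebra_simps)
    also have "\<dots> \<le> S1 + S0 * Pb" using dpos S by (simp add: mult_left_le_one_le)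
    finally have "\<bar>\<delta> * F1 ?p * hh (8 * trep u)\<bar> \<le> S1 + S0 * Pb" using dpos by (simp add: abs_mult mult.assoc)
    then show ?thesis unfolding e abs_mult using Kc by (simp add: mult_left_mono)
  qed
  have s2: "\<bar>pdx ?g w\<bar> \<le> Kc * (S2 + 16 * S0)" for w
  proof -
    obtain a u where w: "w = (a, u)" by (cases w)
    let ?p = "(t0 + \<delta> * a, r + \<delta> * trep u)"
    have e: "pdx ?g w = Kc * (\<delta> * F2 ?p * hh (8 * trep u) + F ?p * (8 * hh' (8 * trep u)))"
      using pc(3)[of w] unfolding w PER_def BBx_def by simp
    have "\<bar>F2 ?p * hh (8 * trep u)\<bar> \<le> S2 * 1"
      unfolding abs_mult using Fb h01 S by (intro mult_mono) auto
    then have "\<delta> * \<bar>F2 ?p * hh (8 * trep u)\<bar> \<le> 1 * S2"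
      using dpos S by (intro mult_mono) auto
    then have A: "\<bar>\<delta> * F2 ?p * hh (8 * trep u)\<bar> \<le> S2" using dpos by (simp add: abs_mult mult.assoc)
    have "\<bar>F ?p * (8 * hh' (8 * trep u))\<bar> \<le> S0 * (8 * 2)"
      unfolding abs_mult using Fb h01 S by (intro mult_mono) auto
    then have "\<bar>\<delta> * F2 ?p * hh (8 * trep u) + F ?p * (8 * hh' (8 * trep u))\<bar> \<le> S2 + 16 * S0"
      using A abs_triangle_ineq[of "\<delta> * F2 ?p * hh (8 * trep u)" "F ?p * (8 * hh' (8 * trep u))"] by linarith
    then show ?thesis unfolding e abs_mult using Kc by (simp add: mult_left_mono)
  qed
  have "supnorm UNIV ?g + supnorm UNIV (pdt ?g) + supnorm UNIV (pdx ?g) \<le> Kc * S0 + Kc * (S1 + S0 * Pb) + Kc * (S2 + 16 * S0)"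
    using supnorm_le[of ?g, OF s0] supnorm_le[of "pdt ?g", OF s1] supnorm_le[of "pdx ?g", OF s2] by linarith
  also have "\<dots> = Kc * (S0 * (17 + Pb) + S1 + S2)" by (simp add: algebra_simps)
  finally have "supnorm UNIV ?g + supnorm UNIV (pdt ?g) + supnorm UNIV (pdx ?g) \<le> 1" using KB by linarith
  then show ?thesis unfolding B1_def using C1c ball by blast
qed

end

context pset begin

lemma scale_eq:
  assumes cd: "\<delta> = 1 / c" and t0: "t0 = 5 / (32 * c)" and M: "M = 8 * c"
  shows "scaleS \<delta> (t0, r) (\<lambda>w. Kc * PER (BB F t0 \<delta> r \<delta> 8) 0 w) w
       = \<delta> powr (-2) * Kc * (1 * PER (BB F 0 1 r 1 M) r w)"
proof -
  obtain t x where w: "w = (t, x)" by (cases w)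
  define y where "y = trep (x - r)"
  have dpos: "\<delta> > 0" "\<delta> * c = 1" using cd c1 by auto
  have cpos: "c > 0" using c1 by simp
  have P: "1 * PER (BB F 0 1 r 1 M) r w = F (t, r + y) * hh (M * y)"
    unfolding PER_def BB_def w y_def by simp
  have dist: "dRT (t0, r) (t, x) = \<bar>t0 - t\<bar> + \<bar>y\<bar>"
    unfolding dRT_def dT_def y_def using abs_trep_neg[of "x - r"] by simp
  show ?thesis
  proof (cases "w \<in> ballRT (t0, r) \<delta>")
    case False
    have "F (t, r + y) * hh (M * y) = 0"
    proof (rule ccontr)
      assume nz: "F (t, r + y) * hh (M * y) \<noteq> 0"
      then have "1/16 < c * t \<and> c * t < 1/4" using F_supp by auto
      moreover have "c * t0 = 5/32" using t0 c1 by simp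
      ultimately have "\<bar>c * t0 - c * t\<bar> < 3/32" unfolding abs_less_iff by linarith
      moreover have "c * \<bar>t0 - t\<bar> = \<bar>c * (t0 - t)\<bar>" using c1 by (simp add: abs_mult)
      moreover have "c * (t0 - t) = c * t0 - c * t" by (simp add: right_diff_distrib)
      ultimately have "c * \<bar>t0 - t\<bar> < 3/32" by simp
      then have a: "\<bar>t0 - t\<bar> < 3/32 * \<delta>" using cpos unfolding cd by (simp add: field_simps)
      have "\<bar>M * y\<bar> < 1" using nz hh_zero by force
      then have "8 * c * \<bar>y\<bar> < 1" using M c1 by (simp add: abs_mult)
      then have b: "\<bar>y\<bar> < 1/8 * \<delta>" using cpos unfolding cd by (simp add: field_simps)
      have "dRT (t0, r) (t, x) < \<delta>" unfolding dist using a b dpos by linarith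
      then show False using False w unfolding ballRT_def by simp
    qed
    then show ?thesis using False P unfolding scaleS_def by simp
  next
    case inball: True
    show ?thesis
    proof (cases "-1/2 \<le> y / \<delta> \<and> y / \<delta> < 1/2")
      case True
      have tr: "trep (y / \<delta>) = y / \<delta>" using True trep_id by auto
      have e1: "t0 + \<delta> * ((t - t0) / \<delta>) = t" using dpos by simp
      have e2: "r + \<delta> * (y / \<delta>) = r + y" using dpos by simp
      have e3: "8 * (y / \<delta>) = M * y" using M cd by simp
      have "scaleS \<delta> (t0, r) (\<lambda>w. Kc * PER (BB F t0 \<delta> r \<delta> 8) 0 w) w
          = \<delta> powr (-2) * (Kc * (F (t0 + \<delta> * ((t - t0) / \<delta>), r + \<delta> * trep (y / \<delta>)) * hh (8 * trep (y / \<delta>))))"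
        using inball True unfolding scaleS_def chart_def PER_def BB_def w y_def by simp
      also have "\<dots> = \<delta> powr (-2) * Kc * (F (t, r + y) * hh (M * y))"
        unfolding tr e1 e2 e3 by simp
      finally show ?thesis using P by simp
    next
      case False
      then have "\<bar>y\<bar> \<ge> \<delta> / 2" using dpos by (auto simp: field_simps abs_if split: if_splits)
      then have "8 * c * \<bar>y\<bar> \<ge> 8 * c * (\<delta> / 2)" using c1 by (intro mult_left_mono) auto
      then have "\<bar>M * y\<bar> \<ge> 1" using M dpos c1 by (simp add: abs_mult)
      then have "hh (M * y) = 0" using hh_zero by blast
      have "scaleS \<delta> (t0, r) (\<lambda>w. Kc * PER (BB F t0 \<delta> r \<delta> 8) 0 w) w
          = \<delta> powr (-2) * chart (\<lambda>w. Kc * PER (BB F t0 \<delta> r \<delta> 8) 0 w) ((t - t0) / \<delta>, y / \<delta>)"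
        using inball unfolding scaleS_def w y_def by simp
      moreover have "chart (\<lambda>w. Kc * PER (BB F t0 \<delta> r \<delta> 8) 0 w) ((t - t0) / \<delta>, y / \<delta>) = 0"
        using False unfolding chart_def by auto
      ultimately show ?thesis using P \<open>hh (M * y) = 0\<close> by simp
    qed
  qed
qed

end

context pset begin

lemma main_est:
  fixes n :: nat
  assumes cn: "c = 2 ^ n" and X: "X \<in> Calpha \<alpha>"
    and b: "\<forall>t>0. \<forall>x. \<bar>f (t, x)\<bar> \<le> S0 \<and> \<bar>pdt f (t, x)\<bar> \<le> S1 \<and> \<bar>pdx f (t, x)\<bar> \<le> S2"
    and Pb: "\<forall>r>0. \<bar>deriv \<phi> r\<bar> \<le> Pb" and Pb0: "Pb \<ge> 0"
    and Nf: "S0 + S1 + S2 \<le> Nf" "Nf > 0"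
  shows "\<bar>X F\<bar> \<le> 8 * (17 + Pb) * (1 / c) powr (1 + \<alpha>) * Nf * holder_norm \<alpha> X (-1) 2"
proof -
  define \<delta> where "\<delta> = 1 / c"
  define t0 where "t0 = 5 / (32 * c)"
  define M :: nat where "M = 8 * 2 ^ n"
  define Kc where "Kc = 1 / ((17 + Pb) * Nf)"
  define N where "N = holder_norm \<alpha> X (-1) 2"
  have cpos: "c > 0" using c1 by simp
  have Mr: "real M = 8 * c" unfolding M_def cn by simp
  have M4: "real M \<ge> 4" using Mr c1 by simp
  have M2: "M \<ge> 2" using M4 by simp
  have dpos: "\<delta> > 0" "\<delta> \<le> 1" using c1 unfolding \<delta>_def by auto
  have S: "0 \<le> S0" "0 \<le> S1" "0 \<le> S2" using b[rule_format, of 1 0] by auto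
  define xj where "xj j = real j / real M - 1/2" for j :: nat
  define P where "P j = (\<lambda>w. 1 * PER (BB F 0 1 (xj j) 1 (real M)) (xj j) w)" for j
  have PC: "C1c (P j)" for j unfolding P_def by (rule P_C1c[OF M4])
  have Fsum: "F = (\<lambda>w. \<Sum>j<M. P j w)"
  proof
    fix w :: "real \<times> real"
    obtain t x where w: "w = (t, x)" by (cases w)
    have Fe: "F (t, xj j + trep (x - xj j)) = F (t, x)" for j
    proof -
      define k where "k = \<lfloor>x - xj j + 1/2\<rfloor>"
      have "xj j + trep (x - xj j) = x - of_int k" unfolding trep_def k_def by simp
      moreover have "F (t, (x - of_int k) + of_int k) = F (t, x - of_int k)" by (rule F_per)
      ultimately show ?thesis by simp
    qed
    have "(\<Sum>j<M. P j w) = (\<Sum>j<M. F (t, x) * hh (real M * trep ((x + 1/2) - real j / real M)))"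
    proof (rule sum.cong)
      fix j assume "j \<in> {..<M}"
      have tr: "trep (x - xj j) = trep ((x + 1/2) - real j / real M)" unfolding xj_def by (simp add: algebra_simps)
      show "P j w = F (t, x) * hh (real M * trep ((x + 1/2) - real j / real M))"
        unfolding P_def PER_def BB_def w using Fe[of j] by (simp only: tr fst_conv snd_conv mult_1 mult_1_right add_0 mult_1_left)
    qed simp
    also have "\<dots> = F (t, x)" using hh_partition[OF M2, of "x + 1/2"] by (simp add: sum_distrib_left[symmetric])
    finally show "F w = (\<Sum>j<M. P j w)" using w by simp
  qed
  have lin: "linear_C1c X" using X unfolding Calpha_def by simp
  have XF: "X F = (\<Sum>j<M. X (P j))"
    using X_sum[OF lin, of "{..<M}" P] PC Fsum by simp
  have Kpos: "Kc > 0" unfolding Kc_def using Pb0 Nf by simp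
  have KB: "Kc * (S0 * (17 + Pb) + S1 + S2) \<le> 1"
  proof -
    have "S0 * (17 + Pb) + S1 + S2 \<le> (17 + Pb) * (S0 + S1 + S2)" using S Pb0 by (simp add: algebra_simps)
    also have "\<dots> \<le> (17 + Pb) * Nf" using Nf Pb0 by (intro mult_left_mono) auto
    finally have "Kc * (S0 * (17 + Pb) + S1 + S2) \<le> Kc * ((17 + Pb) * Nf)" using Kpos by (intro mult_left_mono) auto
    also have "\<dots> = 1" unfolding Kc_def using Pb0 Nf by simp
    finally show ?thesis .
  qed
  define q where "q = \<delta> powr (-2) * Kc"
  have qpos: "q > 0" unfolding q_def using dpos Kpos by simp
  have each: "\<bar>X (P j)\<bar> \<le> \<delta> powr \<alpha> * N / q" if "j < M" for j
  proof -
    let ?g = "\<lambda>w. Kc * PER (BB F t0 \<delta> (xj j) \<delta> 8) 0 w"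
    have gB: "?g \<in> B1" by (rule g_B1[OF \<delta>_def t0_def Kpos b Pb KB])
    have se: "scaleS \<delta> (t0, xj j) ?g = (\<lambda>w. q * P j w)"
    proof
      fix w show "scaleS \<delta> (t0, xj j) ?g w = q * P j w"
        unfolding q_def P_def by (rule scale_eq[OF \<delta>_def t0_def Mr])
    qed
    have XS: "X (scaleS \<delta> (t0, xj j) ?g) = q * X (P j)" unfolding se by (rule X_scale[OF lin PC])
    have zin: "(t0, xj j) \<in> {-1..2} \<times> {-1/2..<1/2}"
    proof -
      have "0 < t0" "t0 \<le> 1" unfolding t0_def using c1 by (auto simp: field_simps)
      moreover have "0 \<le> real j / real M" "real j / real M < 1" using that M2 by auto
      then have "-1/2 \<le> xj j \<and> xj j < 1/2" unfolding xj_def by linarith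
      ultimately show ?thesis by simp
    qed
    have "\<bar>q * X (P j)\<bar> \<le> \<delta> powr \<alpha> * N"
      using holder_bound[OF X dpos zin gB] XS unfolding N_def by simp
    then have "q * \<bar>X (P j)\<bar> \<le> \<delta> powr \<alpha> * N" using qpos by (simp add: abs_mult)
    then show ?thesis using qpos by (simp add: pos_le_divide_eq mult.commute)
  qed
  have "\<bar>X F\<bar> \<le> (\<Sum>j<M. \<bar>X (P j)\<bar>)" unfolding XF by (rule sum_abs)
  also have "\<dots> \<le> (\<Sum>j<M. \<delta> powr \<alpha> * N / q)" by (rule sum_mono) (use each in auto)
  also have "\<dots> = real M * (\<delta> powr \<alpha> * N / q)" by simp
  also have "\<dots> = 8 * (17 + Pb) * (1 / c) powr (1 + \<alpha>) * Nf * N"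
  proof -
    have p2: "\<delta> powr (-2) = 1 / \<delta>^2" using dpos by (simp add: powr_minus powr_numeral divide_inverse)
    have p1: "(1 / c) powr (1 + \<alpha>) = \<delta> * \<delta> powr \<alpha>" unfolding \<delta>_def[symmetric] using dpos by (simp add: powr_add)
    have cd: "c = 1 / \<delta>" unfolding \<delta>_def using cpos by simp
    have p1': "\<delta> powr (1 + \<alpha>) = \<delta> * \<delta> powr \<alpha>" using dpos by (simp add: powr_add)
    show ?thesis unfolding p1 Mr q_def p2 Kc_def cd using dpos Pb0 Nf
      by (simp add: field_simps power2_eq_square p1')
  qed
  finally show ?thesis unfolding N_def .
qed

end

theorem lemma4p4:
  fixes \<phi> :: "real \<Rightarrow> real"
  assumes phi_smooth: "smooth_on {0<..} \<phi>"
    and phi_range: "\<forall>r>0. 0 \<le> \<phi> r \<and> \<phi> r \<le> 1"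
    and phi_supp: "\<forall>r>0. r \<notin> {1/16<..<1/4} \<longrightarrow> \<phi> r = 0"
    and phi_pou: "\<forall>r>0. ((\<lambda>n::int. \<phi> (2 powr of_int n * r)) has_sum 1) UNIV"
  shows "\<exists>C0::real. \<forall>\<alpha> (f :: real \<times> real \<Rightarrow> real) T1 X (n::nat).
     -1 < \<alpha> \<and> \<alpha> < 0 \<and>
     (\<forall>t>0. \<forall>x. f (t, x + 1) = f (t, x)) \<and>
     C1_on ({0<..} \<times> UNIV) f \<and>
     (\<forall>t x. t \<ge> T1 \<longrightarrow> f (t, x) = 0) \<and>
     bounded (f ` Omega0) \<and> bounded (pdt f ` Omega0) \<and> bounded (pdx f ` Omega0) \<and>
     X \<in> Calpha \<alpha>
     \<longrightarrow> \<bar>X (\<lambda>(t, x). if t > 0 then f (t, x) * \<phi> (2 ^ n * t) else 0)\<bar>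
         \<le> C0 * 2 powr (- real n * (1 + \<alpha>)) * C1norm_Omega0 f * holder_norm \<alpha> X (-1) 2"
proof -
  have rng0: "\<forall>r>0. 0 \<le> \<phi> r" using phi_range by blast
  obtain Pb where Pb0: "Pb \<ge> 0" and Pb: "\<forall>r>0. \<bar>deriv \<phi> r\<bar> \<le> Pb"
    using phi'_bound[OF phi_smooth rng0 phi_supp] by blast
  show ?thesis
  proof (intro exI[of _ "8 * (17 + Pb)"] allI impI, elim conjE)
    fix \<alpha> :: real and f :: "real \<times> real \<Rightarrow> real" and T1 :: real and X and n :: nat
    assume fper: "\<forall>t>0. \<forall>x. f (t, x + 1) = f (t, x)" and fC1: "C1_on ({0<..} \<times> UNIV) f"
      and bf: "bounded (f ` Omega0)" and bt: "bounded (pdt f ` Omega0)" and bx: "bounded (pdx f ` Omega0)"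
      and X: "X \<in> Calpha \<alpha>"
    have c1: "(1::real) \<le> 2 ^ n" by simp
    interpret pset \<phi> f "2 ^ n"
      by unfold_locales (use phi_smooth phi_range phi_supp fper fC1 c1 in auto)
    define S0 where "S0 = supnorm Omega0 f"
    define S1 where "S1 = supnorm Omega0 (pdt f)"
    define S2 where "S2 = supnorm Omega0 (pdx f)"
    define N where "N = holder_norm \<alpha> X (-1) 2"
    have bdd: "bdd_above ((\<lambda>z. \<bar>g z\<bar>) ` Omega0)" if gb: "bounded (g ` Omega0)" for g :: "real \<times> real \<Rightarrow> real"
    proof -
      obtain B where "\<forall>y\<in>g ` Omega0. norm y \<le> B" using gb unfolding bounded_iff by blast
      then show ?thesis by (intro bdd_aboveI2[of _ _ B]) auto
    qed
    have sup_le: "\<bar>g z\<bar> \<le> supnorm Omega0 g" if "bounded (g ` Omega0)" "z \<in> Omega0" for g :: "real \<times> real \<Rightarrow> real" and z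
      unfolding supnorm_def using bdd[OF that(1)] that(2) by (rule cSUP_upper[rotated])
    have b: "\<forall>t>0. \<forall>x. \<bar>f (t, x)\<bar> \<le> S0 \<and> \<bar>pdt f (t, x)\<bar> \<le> S1 \<and> \<bar>pdx f (t, x)\<bar> \<le> S2"
    proof (intro allI impI)
      fix t x :: real assume t: "t > 0"
      define k where "k = \<lfloor>x + 1/2\<rfloor>"
      have xe: "x = trep x + of_int k" unfolding trep_def k_def by simp
      have zin: "(t, trep x) \<in> Omega0" unfolding Omega0_def using t trep_range[of x] by auto
      have "f (t, x) = f (t, trep x)" using f_per[OF t, of "trep x" k] xe by simp
      moreover have "pdt f (t, x) = pdt f (t, trep x)" "pdx f (t, x) = pdx f (t, trep x)"
        using pd_per[OF t, of "trep x" k] xe by simp_all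
      ultimately show "\<bar>f (t, x)\<bar> \<le> S0 \<and> \<bar>pdt f (t, x)\<bar> \<le> S1 \<and> \<bar>pdx f (t, x)\<bar> \<le> S2"
        unfolding S0_def S1_def S2_def using sup_le[OF bf zin] sup_le[OF bt zin] sup_le[OF bx zin] by simp
    qed
    have S: "0 \<le> S0" "0 \<le> S1" "0 \<le> S2" using b[rule_format, of 1 0] by auto
    have Nf: "C1norm_Omega0 f = S0 + S1 + S2" unfolding C1norm_Omega0_def S0_def S1_def S2_def by simp
    have Feq: "(\<lambda>(t, x). if t > 0 then f (t, x) * \<phi> (2 ^ n * t) else 0) = F" unfolding FF_def by simp
    have pw: "2 powr (- real n * (1 + \<alpha>)) = (1 / 2 ^ n) powr (1 + \<alpha>)"
    proof -
      have "(1 / 2 ^ n :: real) = 2 powr (- real n)" by (simp add: powr_minus_divide powr_realpow)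
      then show ?thesis by (simp add: powr_powr)
    qed
    show "\<bar>X (\<lambda>(t, x). if t > 0 then f (t, x) * \<phi> (2 ^ n * t) else 0)\<bar>
         \<le> 8 * (17 + Pb) * 2 powr (- real n * (1 + \<alpha>)) * C1norm_Omega0 f * holder_norm \<alpha> X (-1) 2"
    proof (cases "S0 + S1 + S2 > 0")
      case True
      have "\<bar>X F\<bar> \<le> 8 * (17 + Pb) * (1 / 2 ^ n) powr (1 + \<alpha>) * (S0 + S1 + S2) * holder_norm \<alpha> X (-1) 2"
        by (rule main_est[OF refl X b Pb Pb0 order_refl True])
      then show ?thesis unfolding Feq Nf pw .
    next
      case False
      then have "S0 = 0" using S by linarith
      then have "F = (\<lambda>w. 0)" using b unfolding FF_def by (auto simp: fun_eq_iff)
      moreover have "linear_C1c X" using X unfolding Calpha_def by simp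
      ultimately have "X F = 0" using X_zero by simp
      moreover have "C1norm_Omega0 f = 0" using Nf False S by linarith
      ultimately show ?thesis unfolding Feq by simp
    qed
  qed
qed

end
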